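(* For every positive integer $k$: (1) $\lim_{x\to\infty}F^k(x)=k^2-1$; (2) if $k\geq 2$, then $F^k$ is concave down on the interval $(2(k-1),\infty)$; (3) if $k\geq 3$, then $F^k(2(k-1))=F^{k-2}(2(k-1))$.
   Context: For a positive integer $k$, define $F^k:(0,\infty)\to\mathbb{R}$ by $F^k(x)=\delta_0^k(x)-k(x-k)-1$, where $\delta_0^k(x)=2x\sum_{j=1}^{k/2}\cos\left(\frac{(k-(2j-1))\pi}{x}\right)$ if $k$ is even, and $\delta_0^k(x)=x+2x\sum_{j=1}^{(k-1)/2}\cos\left(\frac{(k-(2j-1))\pi}{x}\right)$ if $k$ is odd (an empty sum is $0$). *)

theory Defs
  imports "HOL-Analysis.Analysis"
begin

definition delta0 :: "nat \<Rightarrow> real \<Rightarrow> real" where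
  "delta0 k x =
     (if even k
      then 2 * x * (\<Sum>j=1..k div 2. cos ((real k - (2 * real j - 1)) * pi / x))
      else x + 2 * x * (\<Sum>j=1..(k - 1) div 2. cos ((real k - (2 * real j - 1)) * pi / x)))"

definition F :: "nat \<Rightarrow> real \<Rightarrow> real" where
  "F k x = delta0 k x - real k * (x - real k) - 1"

end

theory Submission
  imports Defs "HOL-Real_Asymp.Real_Asymp"
begin
lemma lim1: "((\<lambda>x::real. x * cos (a * pi / x) - x) \<longlongrightarrow> 0) at_top"
  by real_asymp
lemma d1: "x \<noteq> 0 \<Longrightarrow> ((\<lambda>x. x * cos (a * pi / x)) has_real_derivative
   (cos (a*pi/x) + (a*pi/x) * sin (a*pi/x))) (at x)"
  by (auto intro!: derivative_eq_intros simp: field_simps power2_eq_square)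
lemma d2: "x \<noteq> 0 \<Longrightarrow> ((\<lambda>x. cos (a*pi/x) + (a*pi/x) * sin (a*pi/x)) has_real_derivative
   (-((a*pi)^2 * cos (a*pi/x) / x^3))) (at x)"
  by (auto intro!: derivative_eq_intros simp: field_simps power2_eq_square power3_eq_cube)

definition ee :: "nat \<Rightarrow> real" where "ee k = (if even k then 0 else 1)"
definition aa :: "nat \<Rightarrow> nat \<Rightarrow> real" where "aa k j = real k - (2 * real j - 1)"

lemma F_alt: "F k x = ee k * x + 2 * (\<Sum>j=1..k div 2. x * cos (aa k j * pi / x)) - real k * (x - real k) - 1"
proof -
  have "odd k \<Longrightarrow> (k - 1) div 2 = k div 2" by presburger
  thus ?thesis unfolding F_def delta0_def ee_def aa_def
    by (auto simp: sum_distrib_left algebra_simps)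
qed

lemma ee_k: "ee k + 2 * real (k div 2) = real k"
proof -
  have h: "k = 2 * (k div 2) + k mod 2" by simp
  have "real k = 2 * real (k div 2) + real (k mod 2)"
    by (metis h of_nat_add of_nat_mult of_nat_numeral)
  thus ?thesis unfolding ee_def by (auto simp: odd_iff_mod_2_eq_one)
qed

lemma F_lim: "(F k \<longlongrightarrow> real k ^ 2 - 1) at_top"
proof -
  have eq: "F k x = 2 * (\<Sum>j=1..k div 2. x * cos (aa k j * pi / x) - x) + real k ^ 2 - 1" for x
    unfolding F_alt sum_subtractf using ee_k[of k]
    by (simp add: algebra_simps power2_eq_square) (metis distrib_left mult.commute)
  have "((\<lambda>x. 2 * (\<Sum>j=1..k div 2. x * cos (aa k j * pi / x) - x) + real k ^ 2 - 1) \<longlongrightarrow>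
        2 * (\<Sum>j=1..k div 2. 0) + real k ^ 2 - 1) at_top"
    by (intro tendsto_intros lim1)
  thus ?thesis by (simp add: eq[abs_def] F_def[symmetric])
qed

lemma F_conc: assumes "k \<ge> 2" shows "concave_on {2 * (real k - 1)<..} (F k)"
proof -
  let ?C = "{2 * (real k - 1)<..}"
  have Feq: "F k = (\<lambda>x. ee k * x + 2 * (\<Sum>j=1..k div 2. x * cos (aa k j * pi / x)) - real k * (x - real k) - 1)"
    by (rule ext, rule F_alt)
  show ?thesis unfolding Feq
  proof (rule f''_le0_imp_concave[where f' = "\<lambda>x. ee k + 2 * (\<Sum>j=1..k div 2. cos (aa k j*pi/x) + (aa k j*pi/x) * sin (aa k j*pi/x)) - real k"
      and f'' = "\<lambda>x. 2 * (\<Sum>j=1..k div 2. -((aa k j*pi)^2 * cos (aa k j*pi/x) / x^3))"])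
    show "convex ?C" by simp
  next
    fix x assume x: "x \<in> ?C"
    hence "x \<noteq> 0" using assms by auto
    thus "((\<lambda>x. ee k * x + 2 * (\<Sum>j=1..k div 2. x * cos (aa k j * pi / x)) - real k * (x - real k) - 1) has_real_derivative
      ee k + 2 * (\<Sum>j=1..k div 2. cos (aa k j*pi/x) + (aa k j*pi/x) * sin (aa k j*pi/x)) - real k) (at x)"
      by (auto intro!: derivative_eq_intros DERIV_sum d1 sum.cong simp: field_simps)
  next
    fix x assume x: "x \<in> ?C"
    hence "x \<noteq> 0" using assms by auto
    show "((\<lambda>x. ee k + 2 * (\<Sum>j=1..k div 2. cos (aa k j*pi/x) + (aa k j*pi/x) * sin (aa k j*pi/x)) - real k) has_real_derivative
      2 * (\<Sum>j=1..k div 2. -((aa k j*pi)^2 * cos (aa k j*pi/x) / x^3))) (at x)"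
    proof -
      have "((\<lambda>x. \<Sum>j=1..k div 2. cos (aa k j*pi/x) + (aa k j*pi/x) * sin (aa k j*pi/x)) has_real_derivative
        (\<Sum>j=1..k div 2. -((aa k j*pi)^2 * cos (aa k j*pi/x) / x^3))) (at x)"
        by (rule DERIV_sum) (rule d2[OF \<open>x \<noteq> 0\<close>])
      from DERIV_diff[OF DERIV_add[OF DERIV_const[of "ee k"] DERIV_cmult[OF this, of 2]] DERIV_const[of "real k"]]
      show ?thesis by simp
    qed
  next
    fix x assume x: "x \<in> ?C"
    hence xp: "x > 0" using assms by auto
    have "(aa k j*pi)^2 * cos (aa k j*pi/x) / x^3 \<ge> 0" if j: "j \<in> {1..k div 2}" for j
    proof -
      have "2 * j \<le> k" "1 \<le> j" using j by auto
      hence r1: "2 * real j \<le> real k" and r2: "1 \<le> real j" by linarith+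
      have a0: "0 \<le> aa k j" "2 * aa k j \<le> 2 * (real k - 1)" unfolding aa_def using r1 r2 by simp_all
      have "aa k j * pi / x \<le> pi / 2" using a0 x xp
        by (simp add: divide_simps)
      moreover have "0 \<le> aa k j * pi / x" using a0 xp by simp
      ultimately have "cos (aa k j*pi/x) \<ge> 0" using pi_gt_zero by (intro cos_ge_zero) linarith+
      thus ?thesis using xp by simp
    qed
    hence "(\<Sum>j=1..k div 2. -((aa k j*pi)^2 * cos (aa k j*pi/x) / x^3)) \<le> 0"
      by (intro sum_nonpos) auto
    thus "2 * (\<Sum>j=1..k div 2. -((aa k j*pi)^2 * cos (aa k j*pi/x) / x^3)) \<le> 0" by simp
  qed
qed

lemma sum_shift1: "(\<Sum>j=1..Suc n. g j) = g (1::nat) + (\<Sum>j=1..n. g (Suc j))"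
  by (induction n) (simp_all add: ac_simps)

lemma F_eq: assumes "k \<ge> 3" shows "F k (2 * (real k - 1)) = F (k - 2) (2 * (real k - 1))"
proof -
  obtain m where m: "k = m + 2" using assms by (metis add.commute le_add_diff_inverse2 le_trans numeral_le_iff semiring_norm(68) semiring_norm(72) nat_le_linear trans_le_add2 not_less_eq_eq)
  let ?x = "2 * (real k - 1)"
  have kd: "k div 2 = Suc (m div 2)" using m by simp
  have ee: "ee k = ee m" unfolding ee_def m by simp
  have c1: "cos (aa k 1 * pi / ?x) = 0"
  proof -
    have a1: "aa k 1 = real k - 1" unfolding aa_def by simp
    have "aa k 1 > 0" using a1 assms by simp
    hence "aa k 1 * pi / ?x = pi / 2" unfolding a1[symmetric] by (simp add: field_simps)
    thus ?thesis by (metis cos_pi_half)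
  qed
  have sh: "aa k (Suc j) = aa m j" for j unfolding aa_def m by simp
  show ?thesis unfolding F_alt kd sum_shift1 ee
    using c1 sh m by (simp add: algebra_simps)
qed

theorem lemma3p3:
  fixes k :: nat
  assumes "k \<ge> 1"
  shows "(F k \<longlongrightarrow> real k ^ 2 - 1) at_top
    \<and> (k \<ge> 2 \<longrightarrow> concave_on {2 * (real k - 1)<..} (F k))
    \<and> (k \<ge> 3 \<longrightarrow> F k (2 * (real k - 1)) = F (k - 2) (2 * (real k - 1)))"
  using F_lim F_conc F_eq by blast

end
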